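(* Let $(\mathbf{X}^m,\kappa^m)\in\mathbb{X}^h\times\mathbb{K}^h$, $m\ge 0$, be a solution sequence of the PC-ZJB scheme (defined in the context) with $\min_{1\le j\le N}|\mathbf{h}^m_j|>0$ for all $m\ge0$, where $\mathbf{h}^m_j=\mathbf{X}^m(\rho_j)-\mathbf{X}^m(\rho_{j-1})$. Suppose that as $m\to\infty$, $\mathbf{X}^m$ and $\kappa^m$ converge to an equilibrium state $\Gamma^e=\mathbf{X}^e=(x^e,y^e)^T\in\mathbb{X}^h$ and $\kappa^e\in\mathbb{K}^h$, respectively, and that the predictors $\widetilde{\mathbf{X}}^{m+1/2}$ also converge to $\mathbf{X}^e$. Assume further that $\min_{1\le i\le N}|\mathbf{h}^e_i|>0$, where $\mathbf{h}^e_i=\mathbf{X}^e(\rho_i)-\mathbf{X}^e(\rho_{i-1})$. Then: (1) $\kappa^e(\rho)\equiv\kappa^c$ for all $\rho\in[0,1]$, where $\kappa^c\neq0$ is a constant; (2) $\lim_{m\to\infty}\Psi^m=\Psi^e:=\frac{\max_{1\le i\le N}|\mathbf{h}^e_i|}{\min_{1\le i\le N}|\mathbf{h}^e_i|}=1$, where $\Psi^m=\frac{\max_{1\le i\le N}|\mathbf{h}^m_i|}{\min_{1\le i\le N}|\mathbf{h}^m_i|}$; (3) if $\theta^l_e,\theta^r_e$ denote the left and right contact angles of $\Gamma^e$, then there exist constants $h_0>0$ and $C_0>0$ such that for all $0<h<h_0$, $|\cos\theta^l_e-\sigma|\le C_0h$ and $|\cos\theta^r_e-\sigma|\le C_0h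$.
   Context: Let $N\ge3$, $h=1/N$, $\rho_j=jh$, $I_j=[\rho_{j-1},\rho_j]$; $\mathbb{K}^h$ = continuous piecewise affine functions on $[0,1]$ w.r.t. this mesh, $\mathbb{K}^h_0=\{\psi\in\mathbb{K}^h:\psi(0)=\psi(1)=0\}$, $\mathbb{X}^h=\mathbb{K}^h\times\mathbb{K}^h_0$. For $\mathbf{Y}\in\mathbb{X}^h$ with edges $\mathbf{h}_j=\mathbf{Y}(\rho_j)-\mathbf{Y}(\rho_{j-1})\neq0$: normal on $I_j$ is $\big(-(\mathbf{h}_j)_2,(\mathbf{h}_j)_1\big)^T/|\mathbf{h}_j|$, $\partial_s f|_{I_j}=h\partial_\rho f|_{I_j}/|\mathbf{h}_j|$, $\langle u,v\rangle_{\mathbf{Y}}=\int_0^1u\cdot v|\partial_\rho\mathbf{Y}|d\rho$, $\langle u,v\rangle^h_{\mathbf{Y}}=\frac12\sum_j|\mathbf{h}_j|[(u\cdot v)(\rho_j^-)+(u\cdot v)(\rho_{j-1}^+)]$. Parameters $\tau>0,\eta>0,\sigma\in\mathbb{R}$ ($\sigma=\cos\theta_i$, $\theta_i\in(0,\pi)$ Young's angle). ZJB step of size $\delta$ from $\mathbf{X}^m$: find $(\mathbf{X}^{new},\kappa^{new})\in\mathbb{X}^h\times\mathbb{K}^h$ with $\langle(\mathbf{X}^{new}-\mathbf{X}^m)/\delta,\mathbf{n}^m\psi\rangle^h_{\mathbf{X}^m}+\langle\partial_s\kappa^{new},\partial_s\psi\rangle_{\mathbf{X}^m}=0$ $\forall\psi\in\mathbb{K}^h$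 and $\langle\kappa^{new}\mathbf{n}^m,\boldsymbol\omega\rangle^h_{\mathbf{X}^m}-\langle\partial_s\mathbf{X}^{new},\partial_s\boldsymbol\omega\rangle_{\mathbf{X}^m}-\frac1{\eta\delta}[(x^{new}(0)-x^m(0))\omega_1(0)+(x^{new}(1)-x^m(1))\omega_1(1)]+\sigma[\omega_1(1)-\omega_1(0)]=0$ $\forall\boldsymbol\omega\in\mathbb{X}^h$. PC-ZJB scheme: $\widetilde{\mathbf{X}}^{m+1/2}$ is one ZJB step of size $\tau/2$ from $\mathbf{X}^m$; with normal $\widetilde{\mathbf{n}}^{m+1/2}$, $\partial_s$ and inner products on $\widetilde\Gamma^{m+1/2}=\widetilde{\mathbf{X}}^{m+1/2}$, $(\mathbf{X}^{m+1},\kappa^{m+1})\in\mathbb{X}^h\times\mathbb{K}^h$ satisfy $\langle(\mathbf{X}^{m+1}-\mathbf{X}^m)/\tau,\widetilde{\mathbf{n}}^{m+1/2}\psi\rangle^h+\langle\partial_s\frac{\kappa^{m+1}+\kappa^m}{2},\partial_s\psi\rangle=0$ $\forall\psi\in\mathbb{K}^h$ and $\langle\frac{\kappa^{m+1}+\kappa^m}2\widetilde{\mathbf{n}}^{m+1/2},\boldsymbol\omega\rangle^h-\langle\partial_s\frac{\mathbf{X}^{m+1}+\mathbf{X}^m}2,\partial_s\boldsymbol\omega\rangle+\sigma[\omega_1(1)-\omega_1(0)]-\frac1{\eta\tau}[(x^{m+1}(0)-x^m(0))\omega_1(0)+(x^{m+1}(1)-x^m(1))\omega_1(1)]=0$ $\forall\boldsymbol\omega\in\mathbb{X}^h$;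 $\kappa^0$ is a given initial curvature. Contact angles of $\Gamma^e$: $\theta^l_e=\arccos(\partial_s x^e|_{I_1})$, $\theta^r_e=\arccos(\partial_s x^e|_{I_N})$. *)

theory Defs
  imports "HOL-Analysis.Analysis"
begin

text \<open>A continuous piecewise affine function is represented by its nodal values
  u 0, ..., u N (values at other indices are irrelevant).\<close>

type_synonym pt = "real \<times> real"

definition meshh :: "nat \<Rightarrow> real" where
  "meshh N = 1 / real N"

definition node :: "nat \<Rightarrow> nat \<Rightarrow> real" where
  "node N j = real j / real N"

definition interp :: "nat \<Rightarrow> (nat \<Rightarrow> real) \<Rightarrow> nat \<Rightarrow> real \<Rightarrow> real" where
  "interp N u j \<rho> = u (j - 1) + (\<rho> - node N (j - 1)) / meshh N * (u j - u (j - 1))"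

definition inXh :: "nat \<Rightarrow> (nat \<Rightarrow> pt) \<Rightarrow> bool" where
  "inXh N W \<longleftrightarrow> snd (W 0) = 0 \<and> snd (W N) = 0"

definition edge :: "(nat \<Rightarrow> pt) \<Rightarrow> nat \<Rightarrow> pt" where
  "edge Y j = Y j - Y (j - 1)"

definition elen :: "(nat \<Rightarrow> pt) \<Rightarrow> nat \<Rightarrow> real" where
  "elen Y j = norm (edge Y j)"

definition nrm :: "(nat \<Rightarrow> pt) \<Rightarrow> nat \<Rightarrow> pt" where
  "nrm Y j = (- snd (edge Y j) / elen Y j, fst (edge Y j) / elen Y j)"

definition ds :: "nat \<Rightarrow> (nat \<Rightarrow> pt) \<Rightarrow> (nat \<Rightarrow> 'a::real_vector) \<Rightarrow> nat \<Rightarrow> 'a" where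
  "ds N Y f j = (meshh N / elen Y j) *\<^sub>R ((1 / meshh N) *\<^sub>R (f j - f (j - 1)))"

definition drhoY :: "nat \<Rightarrow> (nat \<Rightarrow> pt) \<Rightarrow> nat \<Rightarrow> real" where
  "drhoY N Y j = elen Y j / meshh N"

text \<open>The L2 inner product on Y of d_s u and d_s v,
  int_0^1 d_s u . d_s v |d_rho Y| d rho; the integrand is constant on each I_j
  (of length h).\<close>
definition stiff :: "nat \<Rightarrow> (nat \<Rightarrow> pt) \<Rightarrow> (nat \<Rightarrow> 'a::real_inner) \<Rightarrow> (nat \<Rightarrow> 'a) \<Rightarrow> real" where
  "stiff N Y u v = (\<Sum>j = 1..N. inner (ds N Y u j) (ds N Y v j) * drhoY N Y j * meshh N)"

text \<open>The argument F j k is the value of (u . v) at node k taken as limit from inside I_j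
  (needed because the normal is only piecewise constant).\<close>
definition lumped :: "nat \<Rightarrow> (nat \<Rightarrow> pt) \<Rightarrow> (nat \<Rightarrow> nat \<Rightarrow> real) \<Rightarrow> real" where
  "lumped N Y F = (1/2) * (\<Sum>j = 1..N. elen Y j * (F j j + F j (j - 1)))"

definition zjb_step :: "nat \<Rightarrow> real \<Rightarrow> real \<Rightarrow> real \<Rightarrow> (nat \<Rightarrow> pt) \<Rightarrow> (nat \<Rightarrow> pt) \<Rightarrow> (nat \<Rightarrow> real) \<Rightarrow> bool" where
  "zjb_step N \<eta> \<sigma> \<delta> Xm Xn kn \<longleftrightarrow>
     inXh N Xn \<and>
     (\<forall>\<psi>::nat \<Rightarrow> real.
        lumped N Xm (\<lambda>j k. inner ((1 / \<delta>) *\<^sub>R (Xn k - Xm k)) (nrm Xm j) * \<psi> k)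
        + stiff N Xm kn \<psi> = 0) \<and>
     (\<forall>\<omega>::nat \<Rightarrow> pt. inXh N \<omega> \<longrightarrow>
        lumped N Xm (\<lambda>j k. kn k * inner (nrm Xm j) (\<omega> k))
        - stiff N Xm Xn \<omega>
        - 1 / (\<eta> * \<delta>) * ((fst (Xn 0) - fst (Xm 0)) * fst (\<omega> 0)
                          + (fst (Xn N) - fst (Xm N)) * fst (\<omega> N))
        + \<sigma> * (fst (\<omega> N) - fst (\<omega> 0)) = 0)"

definition pc_step :: "nat \<Rightarrow> real \<Rightarrow> real \<Rightarrow> real \<Rightarrow> (nat \<Rightarrow> pt) \<Rightarrow> (nat \<Rightarrow> real)
    \<Rightarrow> (nat \<Rightarrow> pt) \<Rightarrow> (nat \<Rightarrow> pt) \<Rightarrow> (nat \<Rightarrow> real) \<Rightarrow> bool" where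
  "pc_step N \<tau> \<eta> \<sigma> Xm km Xt Xn kn \<longleftrightarrow>
     inXh N Xn \<and>
     (\<forall>\<psi>::nat \<Rightarrow> real.
        lumped N Xt (\<lambda>j k. inner ((1 / \<tau>) *\<^sub>R (Xn k - Xm k)) (nrm Xt j) * \<psi> k)
        + stiff N Xt (\<lambda>k. (kn k + km k) / 2) \<psi> = 0) \<and>
     (\<forall>\<omega>::nat \<Rightarrow> pt. inXh N \<omega> \<longrightarrow>
        lumped N Xt (\<lambda>j k. (kn k + km k) / 2 * inner (nrm Xt j) (\<omega> k))
        - stiff N Xt (\<lambda>k. (1/2) *\<^sub>R (Xn k + Xm k)) \<omega>
        + \<sigma> * (fst (\<omega> N) - fst (\<omega> 0))
        - 1 / (\<eta> * \<tau>) * ((fst (Xn 0) - fst (Xm 0)) * fst (\<omega> 0)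
                          + (fst (Xn N) - fst (Xm N)) * fst (\<omega> N)) = 0)"

definition pc_zjb_solution :: "nat \<Rightarrow> real \<Rightarrow> real \<Rightarrow> real
    \<Rightarrow> (nat \<Rightarrow> nat \<Rightarrow> pt) \<Rightarrow> (nat \<Rightarrow> nat \<Rightarrow> real) \<Rightarrow> (nat \<Rightarrow> nat \<Rightarrow> pt) \<Rightarrow> bool" where
  "pc_zjb_solution N \<tau> \<eta> \<sigma> X \<kappa> Xt \<longleftrightarrow>
     (\<forall>m. inXh N (X m)
        \<and> (\<exists>kt. zjb_step N \<eta> \<sigma> (\<tau> / 2) (X m) (Xt m) kt)
        \<and> pc_step N \<tau> \<eta> \<sigma> (X m) (\<kappa> m) (Xt m) (X (Suc m)) (\<kappa> (Suc m)))"

definition mesh_ratio :: "nat \<Rightarrow> (nat \<Rightarrow> pt) \<Rightarrow> real" where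
  "mesh_ratio N Y = Max (elen Y ` {1..N}) / Min (elen Y ` {1..N})"

definition curve_length :: "nat \<Rightarrow> (nat \<Rightarrow> pt) \<Rightarrow> real" where
  "curve_length N Y = (\<Sum>j = 1..N. elen Y j)"

definition theta_l :: "nat \<Rightarrow> (nat \<Rightarrow> pt) \<Rightarrow> real" where
  "theta_l N Y = arccos (fst (ds N Y Y 1))"

definition theta_r :: "nat \<Rightarrow> (nat \<Rightarrow> pt) \<Rightarrow> real" where
  "theta_r N Y = arccos (fst (ds N Y Y N))"

end

theory Submission
  imports Defs
begin


lemma edge_lim:
  assumes Y: "\<forall>k\<le>N. (\<lambda>m. Y m k) \<longlonglongrightarrow> Ye k" and j: "j \<le> N"
  shows "(\<lambda>m. edge (Y m) j) \<longlonglongrightarrow> edge Ye j"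
  unfolding edge_def using Y j by (intro tendsto_diff) auto

lemma elen_lim:
  assumes Y: "\<forall>k\<le>N. (\<lambda>m. Y m k) \<longlonglongrightarrow> Ye k" and j: "j \<le> N"
  shows "(\<lambda>m. elen (Y m) j) \<longlonglongrightarrow> elen Ye j"
  unfolding elen_def by (intro tendsto_norm edge_lim[OF Y j])

lemma nrm_lim:
  assumes Y: "\<forall>k\<le>N. (\<lambda>m. Y m k) \<longlonglongrightarrow> Ye k" and j: "j \<le> N" and p: "elen Ye j \<noteq> 0"
  shows "(\<lambda>m. nrm (Y m) j) \<longlonglongrightarrow> nrm Ye j"
  unfolding nrm_def
  by (intro tendsto_Pair tendsto_divide tendsto_minus tendsto_fst tendsto_snd edge_lim[OF Y j] elen_lim[OF Y j] p)

lemma ds_lim: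
  fixes u :: "nat \<Rightarrow> nat \<Rightarrow> 'a::real_normed_vector"
  assumes Y: "\<forall>k\<le>N. (\<lambda>m. Y m k) \<longlonglongrightarrow> Ye k" and j: "j \<le> N" and p: "elen Ye j \<noteq> 0"
    and u: "\<forall>k\<le>N. (\<lambda>m. u m k) \<longlonglongrightarrow> ue k"
  shows "(\<lambda>m. ds N (Y m) (u m) j) \<longlonglongrightarrow> ds N Ye ue j"
  unfolding ds_def using u j
  by (intro tendsto_scaleR tendsto_divide tendsto_const elen_lim[OF Y j] p tendsto_diff) auto

lemma stiff_lim:
  fixes u :: "nat \<Rightarrow> nat \<Rightarrow> 'a::real_inner"
  assumes N: "N > 0" and Y: "\<forall>k\<le>N. (\<lambda>m. Y m k) \<longlonglongrightarrow> Ye k" and p: "\<forall>j\<in>{1..N}. elen Ye j \<noteq> 0"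
    and u: "\<forall>k\<le>N. (\<lambda>m. u m k) \<longlonglongrightarrow> ue k"
  shows "(\<lambda>m. stiff N (Y m) (u m) v) \<longlonglongrightarrow> stiff N Ye ue v"
  unfolding stiff_def drhoY_def
proof (intro tendsto_sum)
  fix j assume j: "j \<in> {1..N}"
  then have jN: "j \<le> N" by auto
  have pj: "elen Ye j \<noteq> 0" using p j by auto
  show "(\<lambda>m. inner (ds N (Y m) (u m) j) (ds N (Y m) v j) * (elen (Y m) j / meshh N) * meshh N)
     \<longlonglongrightarrow> inner (ds N Ye ue j) (ds N Ye v j) * (elen Ye j / meshh N) * meshh N"
    by (intro tendsto_mult tendsto_inner ds_lim[OF Y jN pj u] ds_lim[OF Y jN pj] tendsto_const
        tendsto_divide elen_lim[OF Y jN]) (use N in \<open>auto simp: meshh_def\<close>)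
qed

lemma lumped_lim:
  assumes Y: "\<forall>k\<le>N. (\<lambda>m. Y m k) \<longlonglongrightarrow> Ye k"
    and F: "\<forall>j\<in>{1..N}. (\<lambda>m. F m j j) \<longlonglongrightarrow> Fe j j \<and> (\<lambda>m. F m j (j-1)) \<longlonglongrightarrow> Fe j (j-1)"
  shows "(\<lambda>m. lumped N (Y m) (F m)) \<longlonglongrightarrow> lumped N Ye Fe"
  unfolding lumped_def
proof (rule tendsto_mult[OF tendsto_const], rule tendsto_sum)
  fix j assume j: "j \<in> {1..N}"
  then have jN: "j \<le> N" by auto
  show "(\<lambda>m. elen (Y m) j * (F m j j + F m j (j - 1))) \<longlonglongrightarrow> elen Ye j * (Fe j j + Fe j (j - 1))"
    using F j by (intro tendsto_mult tendsto_add elen_lim[OF Y jN]) auto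
qed

lemma lumped_cong:
  "(\<And>j. j\<in>{1..N} \<Longrightarrow> F j j = G j j \<and> F j (j-1) = G j (j-1)) \<Longrightarrow> lumped N Y F = lumped N Y G"
  unfolding lumped_def by (intro arg_cong[where f="\<lambda>x. 1/2 * x"] sum.cong) auto

lemma stiff_formula:
  fixes u v :: "nat \<Rightarrow> 'a::real_inner"
  assumes N: "N > 0" and p: "\<forall>j\<in>{1..N}. elen Y j \<noteq> 0"
  shows "stiff N Y u v = (\<Sum>j=1..N. inner (u j - u (j-1)) (v j - v (j-1)) / elen Y j)"
  unfolding stiff_def
proof (intro sum.cong refl)
  fix j assume j: "j \<in> {1..N}"
  have l: "elen Y j \<noteq> 0" using p j by auto
  have h: "meshh N \<noteq> 0" using N by (simp add: meshh_def)
  show "inner (ds N Y u j) (ds N Y v j) * drhoY N Y j * meshh N = inner (u j - u (j-1)) (v j - v (j-1)) / elen Y j"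
  proof -
    have d: "ds N Y f j = (1 / elen Y j) *\<^sub>R (f j - f (j-1))" for f :: "nat \<Rightarrow> 'a"
      unfolding ds_def using h by (simp only: scaleR_scaleR) simp
    show ?thesis unfolding d drhoY_def using l h
      by (simp only: inner_scaleR_left inner_scaleR_right) (simp add: field_simps power2_eq_square)
  qed
qed

lemma sum_pick1: "finite A \<Longrightarrow> a \<in> A \<Longrightarrow> (\<forall>j\<in>A. j \<noteq> a \<longrightarrow> g j = 0) \<Longrightarrow> sum g A = g a"
  by (subst sum.mono_neutral_right[of A "{a}"]) auto

lemma sum_pick2: "finite A \<Longrightarrow> a \<in> A \<Longrightarrow> b \<in> A \<Longrightarrow> a \<noteq> b \<Longrightarrow> (\<forall>j\<in>A. j \<noteq> a \<and> j \<noteq> b \<longrightarrow> g j = 0) \<Longrightarrow> sum g A = g a + g b"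
  by (subst sum.mono_neutral_right[of A "{a,b}"]) auto



lemma limit_eqs:
  fixes N :: nat and \<tau> \<eta> \<sigma> :: real
    and X Xt :: "nat \<Rightarrow> nat \<Rightarrow> pt" and \<kappa> :: "nat \<Rightarrow> nat \<Rightarrow> real"
    and Xe :: "nat \<Rightarrow> pt" and \<kappa>e :: "nat \<Rightarrow> real"
  assumes N: "N > 0"
    and sol: "pc_zjb_solution N \<tau> \<eta> \<sigma> X \<kappa> Xt"
    and conv_X: "\<forall>k\<le>N. (\<lambda>m. X m k) \<longlonglongrightarrow> Xe k"
    and conv_kappa: "\<forall>k\<le>N. (\<lambda>m. \<kappa> m k) \<longlonglongrightarrow> \<kappa>e k"
    and conv_Xt: "\<forall>k\<le>N. (\<lambda>m. Xt m k) \<longlonglongrightarrow> Xe k"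
    and p: "\<forall>i\<in>{1..N}. elen Xe i \<noteq> 0"
  shows "\<forall>\<psi>. stiff N Xe \<kappa>e \<psi> = 0"
    and "\<forall>\<omega>. inXh N \<omega> \<longrightarrow> lumped N Xe (\<lambda>j k. \<kappa>e k * inner (nrm Xe j) (\<omega> k))
        - stiff N Xe Xe \<omega> + \<sigma> * (fst (\<omega> N) - fst (\<omega> 0)) = 0"
proof -
  have X1: "\<forall>k\<le>N. (\<lambda>m. X (Suc m) k) \<longlonglongrightarrow> Xe k" using conv_X by (auto intro: LIMSEQ_Suc)
  have K1: "\<forall>k\<le>N. (\<lambda>m. \<kappa> (Suc m) k) \<longlonglongrightarrow> \<kappa>e k" using conv_kappa by (auto intro: LIMSEQ_Suc)
  have ps: "\<forall>m. pc_step N \<tau> \<eta> \<sigma> (X m) (\<kappa> m) (Xt m) (X (Suc m)) (\<kappa> (Suc m))"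
    using sol unfolding pc_zjb_solution_def by blast
  show "\<forall>\<psi>. stiff N Xe \<kappa>e \<psi> = 0"
  proof
    fix \<psi> :: "nat \<Rightarrow> real"
    let ?F = "\<lambda>m j k. inner ((1 / \<tau>) *\<^sub>R (X (Suc m) k - X m k)) (nrm (Xt m) j) * \<psi> k"
    let ?Fe = "\<lambda>j k. inner ((1 / \<tau>) *\<^sub>R (Xe k - Xe k)) (nrm Xe j) * \<psi> k"
    have z: "\<forall>m. lumped N (Xt m) (?F m) + stiff N (Xt m) (\<lambda>k. (\<kappa> (Suc m) k + \<kappa> m k) / 2) \<psi> = 0"
      using ps unfolding pc_step_def by blast
    have l1: "(\<lambda>m. lumped N (Xt m) (?F m)) \<longlonglongrightarrow> lumped N Xe ?Fe"
    proof (rule lumped_lim[OF conv_Xt], intro ballI conjI)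
      fix j assume j: "j \<in> {1..N}"
      then have jN: "j \<le> N" "j - 1 \<le> N" and pj: "elen Xe j \<noteq> 0" using p by auto
      show "(\<lambda>m. ?F m j j) \<longlonglongrightarrow> ?Fe j j" "(\<lambda>m. ?F m j (j-1)) \<longlonglongrightarrow> ?Fe j (j-1)"
        using jN X1 conv_X by (intro tendsto_intros nrm_lim[OF conv_Xt jN(1) pj]; simp)+
    qed
    have l2: "(\<lambda>m. stiff N (Xt m) (\<lambda>k. (\<kappa> (Suc m) k + \<kappa> m k) / 2) \<psi>) \<longlonglongrightarrow> stiff N Xe (\<lambda>k. (\<kappa>e k + \<kappa>e k) / 2) \<psi>"
      by (rule stiff_lim[OF N conv_Xt p]) (use K1 conv_kappa in \<open>auto intro!: tendsto_eq_intros\<close>)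
    have "(\<lambda>m. lumped N (Xt m) (?F m) + stiff N (Xt m) (\<lambda>k. (\<kappa> (Suc m) k + \<kappa> m k) / 2) \<psi>)
        \<longlonglongrightarrow> lumped N Xe ?Fe + stiff N Xe (\<lambda>k. (\<kappa>e k + \<kappa>e k) / 2) \<psi>"
      by (rule tendsto_add[OF l1 l2])
    then have "lumped N Xe ?Fe + stiff N Xe (\<lambda>k. (\<kappa>e k + \<kappa>e k) / 2) \<psi> = 0"
      using z by (simp add: LIMSEQ_const_iff)
    moreover have "lumped N Xe ?Fe = 0" by (simp add: lumped_def)
    moreover have "(\<lambda>k. (\<kappa>e k + \<kappa>e k) / 2) = \<kappa>e" by auto
    ultimately show "stiff N Xe \<kappa>e \<psi> = 0" by simp
  qed
  show "\<forall>\<omega>. inXh N \<omega> \<longrightarrow> lumped N Xe (\<lambda>j k. \<kappa>e k * inner (nrm Xe j) (\<omega> k))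
        - stiff N Xe Xe \<omega> + \<sigma> * (fst (\<omega> N) - fst (\<omega> 0)) = 0"
  proof (intro allI impI)
    fix \<omega> :: "nat \<Rightarrow> pt" assume om: "inXh N \<omega>"
    let ?F = "\<lambda>m j k. (\<kappa> (Suc m) k + \<kappa> m k) / 2 * inner (nrm (Xt m) j) (\<omega> k)"
    let ?Fe = "\<lambda>j k. (\<kappa>e k + \<kappa>e k) / 2 * inner (nrm Xe j) (\<omega> k)"
    let ?S = "\<lambda>m. \<sigma> * (fst (\<omega> N) - fst (\<omega> 0))
        - 1 / (\<eta> * \<tau>) * ((fst (X (Suc m) 0) - fst (X m 0)) * fst (\<omega> 0)
                          + (fst (X (Suc m) N) - fst (X m N)) * fst (\<omega> N))"
    let ?Se = "\<sigma> * (fst (\<omega> N) - fst (\<omega> 0))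
        - 1 / (\<eta> * \<tau>) * ((fst (Xe 0) - fst (Xe 0)) * fst (\<omega> 0)
                          + (fst (Xe N) - fst (Xe N)) * fst (\<omega> N))"
    have z: "\<forall>m. lumped N (Xt m) (?F m) - stiff N (Xt m) (\<lambda>k. (1/2) *\<^sub>R (X (Suc m) k + X m k)) \<omega> + ?S m = 0"
      using ps om unfolding pc_step_def by (simp add: algebra_simps)
    have l1: "(\<lambda>m. lumped N (Xt m) (?F m)) \<longlonglongrightarrow> lumped N Xe ?Fe"
    proof (rule lumped_lim[OF conv_Xt], intro ballI conjI)
      fix j assume j: "j \<in> {1..N}"
      then have jN: "j \<le> N" "j - 1 \<le> N" and pj: "elen Xe j \<noteq> 0" using p by auto
      show "(\<lambda>m. ?F m j j) \<longlonglongrightarrow> ?Fe j j" "(\<lambda>m. ?F m j (j-1)) \<longlonglongrightarrow> ?Fe j (j-1)"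
        using jN K1 conv_kappa by (intro tendsto_intros nrm_lim[OF conv_Xt jN(1) pj]; simp)+
    qed
    have l2: "(\<lambda>m. stiff N (Xt m) (\<lambda>k. (1/2) *\<^sub>R (X (Suc m) k + X m k)) \<omega>) \<longlonglongrightarrow> stiff N Xe (\<lambda>k. (1/2) *\<^sub>R (Xe k + Xe k)) \<omega>"
    proof (rule stiff_lim[OF N conv_Xt p], intro allI impI)
      fix k assume k: "k \<le> N"
      have "(\<lambda>m. (1/2) *\<^sub>R (X (Suc m) k + X m k)) \<longlonglongrightarrow> (1/2) *\<^sub>R (Xe k + Xe k)"
        using X1 conv_X k by (intro tendsto_intros) auto
      moreover have "(1/2) *\<^sub>R (Xe k + Xe k) = Xe k" by (simp add: scaleR_2[symmetric])
      ultimately show "(\<lambda>m. (1/2) *\<^sub>R (X (Suc m) k + X m k)) \<longlonglongrightarrow> (1/2) *\<^sub>R (Xe k + Xe k)" by simp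
    qed
    have l3: "?S \<longlonglongrightarrow> ?Se"
      using X1 conv_X N by (intro tendsto_intros; simp)
    have "(\<lambda>m. lumped N (Xt m) (?F m) - stiff N (Xt m) (\<lambda>k. (1/2) *\<^sub>R (X (Suc m) k + X m k)) \<omega> + ?S m)
       \<longlonglongrightarrow> lumped N Xe ?Fe - stiff N Xe (\<lambda>k. (1/2) *\<^sub>R (Xe k + Xe k)) \<omega> + ?Se"
      by (intro tendsto_add tendsto_diff l1 l2 l3)
    then have "lumped N Xe ?Fe - stiff N Xe (\<lambda>k. (1/2) *\<^sub>R (Xe k + Xe k)) \<omega> + ?Se = 0"
      using z by (simp add: LIMSEQ_const_iff)
    moreover have "(\<lambda>k. (1/2) *\<^sub>R (Xe k + Xe k)) = Xe" by (auto simp: scaleR_2[symmetric])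
    moreover have "?Fe = (\<lambda>j k. \<kappa>e k * inner (nrm Xe j) (\<omega> k))" by auto
    ultimately show "lumped N Xe (\<lambda>j k. \<kappa>e k * inner (nrm Xe j) (\<omega> k))
        - stiff N Xe Xe \<omega> + \<sigma> * (fst (\<omega> N) - fst (\<omega> 0)) = 0" by simp
  qed
qed



lemma sum_delta_int:
  fixes G :: "nat \<Rightarrow> 'b::zero \<Rightarrow> 'b \<Rightarrow> real"
  assumes k: "1 \<le> k" "k < N" and G: "\<forall>j. G j 0 0 = 0"
  shows "(\<Sum>j=1..N. G j ((\<lambda>i. if i = k then v else 0) j) ((\<lambda>i. if i = k then v else 0) (j-1)))
       = G k v 0 + G (Suc k) 0 v"
  by (subst sum_pick2[where a=k and b="Suc k"]) (use k G in auto)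

lemma sum_delta_0:
  fixes G :: "nat \<Rightarrow> 'b::zero \<Rightarrow> 'b \<Rightarrow> real"
  assumes k: "0 < N" and G: "\<forall>j. G j 0 0 = 0"
  shows "(\<Sum>j=1..N. G j ((\<lambda>i. if i = 0 then v else 0) j) ((\<lambda>i. if i = 0 then v else 0) (j-1)))
       = G 1 0 v"
  by (subst sum_pick1[where a=1]) (use k G in auto)

lemma sum_delta_N:
  fixes G :: "nat \<Rightarrow> 'b::zero \<Rightarrow> 'b \<Rightarrow> real"
  assumes k: "0 < N" and G: "\<forall>j. G j 0 0 = 0"
  shows "(\<Sum>j=1..N. G j ((\<lambda>i. if i = N then v else 0) j) ((\<lambda>i. if i = N then v else 0) (j-1)))
       = G N v 0"
  by (subst sum_pick1[where a=N]) (use k G in auto)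

lemma node_eqs:
  fixes Xe :: "nat \<Rightarrow> pt" and c \<sigma> :: real
  assumes N: "N > 0" and p: "\<forall>i\<in>{1..N}. elen Xe i \<noteq> 0"
    and E: "\<forall>\<omega>. inXh N \<omega> \<longrightarrow> lumped N Xe (\<lambda>j k. c * inner (nrm Xe j) (\<omega> k))
        - stiff N Xe Xe \<omega> + \<sigma> * (fst (\<omega> N) - fst (\<omega> 0)) = 0"
  shows "\<And>k. 1 \<le> k \<Longrightarrow> k < N \<Longrightarrow>
      - c/2 * (snd (edge Xe k) + snd (edge Xe (Suc k))) - fst (edge Xe k) / elen Xe k
        + fst (edge Xe (Suc k)) / elen Xe (Suc k) = 0"
    and "\<And>k. 1 \<le> k \<Longrightarrow> k < N \<Longrightarrow>
      c/2 * (fst (edge Xe k) + fst (edge Xe (Suc k))) - snd (edge Xe k) / elen Xe k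
        + snd (edge Xe (Suc k)) / elen Xe (Suc k) = 0"
    and "- c/2 * snd (edge Xe 1) + fst (edge Xe 1) / elen Xe 1 - \<sigma> = 0"
    and "- c/2 * snd (edge Xe N) - fst (edge Xe N) / elen Xe N + \<sigma> = 0"
proof -
  have L: "lumped N Xe (\<lambda>j k. c * inner (nrm Xe j) (\<omega> k))
    = 1/2 * (\<Sum>j=1..N. (\<lambda>j x y. elen Xe j * (c * inner (nrm Xe j) x + c * inner (nrm Xe j) y)) j (\<omega> j) (\<omega> (j-1)))"
    for \<omega> :: "nat \<Rightarrow> pt" unfolding lumped_def by simp
  have S: "stiff N Xe Xe \<omega> = (\<Sum>j=1..N. (\<lambda>j x y. inner (Xe j - Xe (j-1)) (x - y) / elen Xe j) j (\<omega> j) (\<omega> (j-1)))"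
    for \<omega> :: "nat \<Rightarrow> pt" by (simp add: stiff_formula[OF N p])
  have en: "elen Xe j * fst (nrm Xe j) = - snd (edge Xe j)" "elen Xe j * snd (nrm Xe j) = fst (edge Xe j)"
    if "j \<in> {1..N}" for j using p that by (auto simp: nrm_def)
  {
    fix k v assume k: "1 \<le> k" "k < N"
    define \<omega> where "\<omega> = (\<lambda>i. if i = k then v else (0::pt))"
    have "inXh N \<omega>" using k by (auto simp: inXh_def \<omega>_def)
    with E have e: "lumped N Xe (\<lambda>j k. c * inner (nrm Xe j) (\<omega> k))
        - stiff N Xe Xe \<omega> + \<sigma> * (fst (\<omega> N) - fst (\<omega> 0)) = 0" by blast
    have z: "\<sigma> * (fst (\<omega> N) - fst (\<omega> 0)) = 0" using k by (simp add: \<omega>_def)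
    have s1: "(\<Sum>j=1..N. elen Xe j * (c * inner (nrm Xe j) (\<omega> j) + c * inner (nrm Xe j) (\<omega> (j-1))))
      = elen Xe k * (c * inner (nrm Xe k) v + c * inner (nrm Xe k) 0) + elen Xe (Suc k) * (c * inner (nrm Xe (Suc k)) 0 + c * inner (nrm Xe (Suc k)) v)"
      unfolding \<omega>_def by (rule sum_delta_int[OF k, where G="\<lambda>j x y. elen Xe j * (c * inner (nrm Xe j) x + c * inner (nrm Xe j) y)"]) simp
    have s2: "(\<Sum>j=1..N. inner (Xe j - Xe (j-1)) (\<omega> j - \<omega> (j-1)) / elen Xe j)
      = inner (Xe k - Xe (k-1)) (v - 0) / elen Xe k + inner (Xe (Suc k) - Xe (Suc k - 1)) (0 - v) / elen Xe (Suc k)"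
      unfolding \<omega>_def by (rule sum_delta_int[OF k, where G="\<lambda>j x y. inner (Xe j - Xe (j-1)) (x - y) / elen Xe j"]) simp
    have e2: "1/2 * (elen Xe k * (c * inner (nrm Xe k) v) + elen Xe (Suc k) * (c * inner (nrm Xe (Suc k)) v))
        - (inner (Xe k - Xe (k-1)) v / elen Xe k + inner (Xe (Suc k) - Xe k) (- v) / elen Xe (Suc k)) = 0"
      using e unfolding lumped_def stiff_formula[OF N p] s1 s2 z by simp
    note e2
  } note int = this
  show "- c/2 * (snd (edge Xe k) + snd (edge Xe (Suc k))) - fst (edge Xe k) / elen Xe k
        + fst (edge Xe (Suc k)) / elen Xe (Suc k) = 0" if k: "1 \<le> k" "k < N" for k
    using int[OF k, of "(1,0)"] en[of k] en[of "Suc k"] k p[rule_format, of k] p[rule_format, of "Suc k"]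
    by (simp add: inner_Pair_0 edge_def algebra_simps) (simp add: field_simps)
  show "c/2 * (fst (edge Xe k) + fst (edge Xe (Suc k))) - snd (edge Xe k) / elen Xe k
        + snd (edge Xe (Suc k)) / elen Xe (Suc k) = 0" if k: "1 \<le> k" "k < N" for k
    using int[OF k, of "(0,1)"] en[of k] en[of "Suc k"] k p[rule_format, of k] p[rule_format, of "Suc k"]
    by (simp add: inner_Pair_0 edge_def algebra_simps) (simp add: field_simps)
  show "- c/2 * snd (edge Xe 1) + fst (edge Xe 1) / elen Xe 1 - \<sigma> = 0"
  proof -
    define \<omega> where "\<omega> = (\<lambda>i::nat. if i = 0 then (1,0) else (0::pt))"
    have "inXh N \<omega>" using N by (auto simp: inXh_def \<omega>_def)
    with E have e: "lumped N Xe (\<lambda>j k. c * inner (nrm Xe j) (\<omega> k))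
        - stiff N Xe Xe \<omega> + \<sigma> * (fst (\<omega> N) - fst (\<omega> 0)) = 0" by blast
    moreover have s1: "(\<Sum>j=1..N. elen Xe j * (c * inner (nrm Xe j) (\<omega> j) + c * inner (nrm Xe j) (\<omega> (j-1))))
      = elen Xe 1 * (c * inner (nrm Xe 1) 0 + c * inner (nrm Xe 1) (1,0))"
      unfolding \<omega>_def by (rule sum_delta_0[OF N, where G="\<lambda>j x y. elen Xe j * (c * inner (nrm Xe j) x + c * inner (nrm Xe j) y)"]) simp
    moreover have s2: "(\<Sum>j=1..N. inner (Xe j - Xe (j-1)) (\<omega> j - \<omega> (j-1)) / elen Xe j)
      = inner (Xe 1 - Xe (1-1)) (0 - (1,0)) / elen Xe 1"
      unfolding \<omega>_def by (rule sum_delta_0[OF N, where G="\<lambda>j x y. inner (Xe j - Xe (j-1)) (x - y) / elen Xe j"]) simp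
    ultimately have H: "1/2 * (elen Xe 1 * (c * inner (nrm Xe 1) (1,0)))
        - (inner (Xe 1 - Xe 0) (- (1,0)) / elen Xe 1) - \<sigma> = 0"
      using N unfolding lumped_def stiff_formula[OF N p] by (simp add: \<omega>_def)
    have i1: "inner (nrm Xe 1) (1,0) = fst (nrm Xe 1)" by (simp add: inner_Pair_0)
    moreover have i2: "inner (Xe 1 - Xe 0) (- (1,0)) = - fst (edge Xe 1)" by (simp add: inner_Pair_0 edge_def)
    moreover have en1: "elen Xe 1 * fst (nrm Xe 1) = - snd (edge Xe 1)" using N by (intro en) auto
    moreover have lc: "elen Xe 1 * (c * fst (nrm Xe 1)) = c * (elen Xe 1 * fst (nrm Xe 1))" by (rule mult.left_commute)
    ultimately have H2: "1/2 * (c * (- snd (edge Xe 1))) - (- fst (edge Xe 1)) / elen Xe 1 - \<sigma> = 0"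
      using H by (simp only: i1 i2 lc en1)
    then show ?thesis by (simp add: algebra_simps)
  qed
  show "- c/2 * snd (edge Xe N) - fst (edge Xe N) / elen Xe N + \<sigma> = 0"
  proof -
    define \<omega> where "\<omega> = (\<lambda>i. if i = N then (1,0) else (0::pt))"
    have "inXh N \<omega>" using N by (auto simp: inXh_def \<omega>_def)
    with E have e: "lumped N Xe (\<lambda>j k. c * inner (nrm Xe j) (\<omega> k))
        - stiff N Xe Xe \<omega> + \<sigma> * (fst (\<omega> N) - fst (\<omega> 0)) = 0" by blast
    moreover have s1: "(\<Sum>j=1..N. elen Xe j * (c * inner (nrm Xe j) (\<omega> j) + c * inner (nrm Xe j) (\<omega> (j-1))))
      = elen Xe N * (c * inner (nrm Xe N) (1,0) + c * inner (nrm Xe N) 0)"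
      unfolding \<omega>_def by (rule sum_delta_N[OF N, where G="\<lambda>j x y. elen Xe j * (c * inner (nrm Xe j) x + c * inner (nrm Xe j) y)"]) simp
    moreover have s2: "(\<Sum>j=1..N. inner (Xe j - Xe (j-1)) (\<omega> j - \<omega> (j-1)) / elen Xe j)
      = inner (Xe N - Xe (N-1)) ((1,0) - 0) / elen Xe N"
      unfolding \<omega>_def by (rule sum_delta_N[OF N, where G="\<lambda>j x y. inner (Xe j - Xe (j-1)) (x - y) / elen Xe j"]) simp
    ultimately have H: "1/2 * (elen Xe N * (c * inner (nrm Xe N) (1,0)))
        - (inner (Xe N - Xe (N-1)) (1,0) / elen Xe N) + \<sigma> = 0"
      using N unfolding lumped_def stiff_formula[OF N p] by (simp add: \<omega>_def)
    have i1: "inner (nrm Xe N) (1,0) = fst (nrm Xe N)" by (simp add: inner_Pair_0)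
    moreover have i2: "inner (Xe N - Xe (N-1)) (1,0) =  fst (edge Xe N)" by (simp add: inner_Pair_0 edge_def)
    moreover have en1: "elen Xe N * fst (nrm Xe N) = - snd (edge Xe N)" using N by (intro en) auto
    moreover have lc: "elen Xe N * (c * fst (nrm Xe N)) = c * (elen Xe N * fst (nrm Xe N))" by (rule mult.left_commute)
    ultimately have H2: "1/2 * (c * (- snd (edge Xe N))) - ( fst (edge Xe N)) / elen Xe N + \<sigma> = 0"
      using H by (simp only: i1 i2 lc en1)
    then show ?thesis by (simp add: algebra_simps)
  qed
qed



lemma alg:
  fixes t1 t2 q1 q2 d l m :: real
  assumes u: "t1^2 + t2^2 = 1" and v: "q1^2 + q2^2 = 1"
    and a: "q1 - t1 = d * (l * t2 + m * q2)" and b: "q2 - t2 = - (d * (l * t1 + m * q1))"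
    and l: "l > 0" and m: "m > 0" and c: "d \<noteq> 0"
  shows "l = m"
proof (rule ccontr)
  assume ne: "l \<noteq> m"
  have "(q1 - t1) * (q1 + t1) + (q2 - t2) * (q2 + t2) = 0" using u v by (simp add: algebra_simps power2_eq_square)
  also have "(q1 - t1) * (q1 + t1) + (q2 - t2) * (q2 + t2)
     = d * (l * t2 + m * q2) * (q1 + t1) - d * (l * t1 + m * q1) * (q2 + t2)"
    by (simp only: a b) simp
  also have "\<dots> = d * (l - m) * (t2 * q1 - t1 * q2)" by (simp add: algebra_simps)
  finally have "d * (l - m) * (t2 * q1 - t1 * q2) = 0" .
  then have D: "t2 * q1 - t1 * q2 = 0" using ne c by simp
  have "(q1 - t1) * t1 + (q2 - t2) * t2 = d * (l * t2 + m * q2) * t1 - d * (l * t1 + m * q1) * t2"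
    by (simp only: a b) simp
  also have "\<dots> = d * m * (q2 * t1 - q1 * t2)" by (simp add: algebra_simps)
  also have "\<dots> = 0" using D by (simp add: algebra_simps)
  finally have dt: "q1 * t1 + q2 * t2 = 1" using u by (simp add: algebra_simps power2_eq_square)
  have "(q1 - t1)^2 + (q2 - t2)^2 = (q1^2 + q2^2) + (t1^2 + t2^2) - 2 * (q1 * t1 + q2 * t2)"
    by (simp add: algebra_simps power2_eq_square)
  also have "\<dots> = 0" using u v dt by simp
  finally have "q1 = t1 \<and> q2 = t2" by (simp add: sum_power2_eq_zero_iff)
  then have "d * (l + m) * t2 = 0" "d * (l + m) * t1 = 0" using a b by (simp_all add: algebra_simps)
  then have "t1 = 0" "t2 = 0" using c l m by simp_all
  then show False using u by simp
qed

lemma abs_le1: "(x::real)^2 + y^2 = 1 \<Longrightarrow> \<bar>x\<bar> \<le> 1"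
proof -
  assume h: "x^2 + y^2 = 1"
  have "x^2 \<le> 1" using h zero_le_power2[of y] by linarith
  then show ?thesis using abs_square_le_1 by blast
qed

lemma abs_snd_le: "\<bar>snd (x::pt)\<bar> \<le> norm x"
  by (metis norm_snd_le prod.collapse real_norm_def)

lemma telescope: fixes f :: "nat \<Rightarrow> real" shows "(\<Sum>j=1..n. f j - f (j-1)) = f n - f 0"
  by (induction n) (auto simp: sum.atLeast1_atMost_eq)

lemma geometry:
  fixes Xe :: "nat \<Rightarrow> pt" and c \<sigma> :: real
  assumes N3: "N \<ge> 3" and sig: "\<bar>\<sigma>\<bar> < 1" and Xe_in: "inXh N Xe"
    and pos: "\<forall>i\<in>{1..N}. elen Xe i > 0"
    and I1: "\<And>k. 1 \<le> k \<Longrightarrow> k < N \<Longrightarrow>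
      - c/2 * (snd (edge Xe k) + snd (edge Xe (Suc k))) - fst (edge Xe k) / elen Xe k
        + fst (edge Xe (Suc k)) / elen Xe (Suc k) = 0"
    and I2: "\<And>k. 1 \<le> k \<Longrightarrow> k < N \<Longrightarrow>
      c/2 * (fst (edge Xe k) + fst (edge Xe (Suc k))) - snd (edge Xe k) / elen Xe k
        + snd (edge Xe (Suc k)) / elen Xe (Suc k) = 0"
    and B0: "- c/2 * snd (edge Xe 1) + fst (edge Xe 1) / elen Xe 1 - \<sigma> = 0"
    and BN: "- c/2 * snd (edge Xe N) - fst (edge Xe N) / elen Xe N + \<sigma> = 0"
  shows "c \<noteq> 0" and "\<forall>j\<in>{1..N}. elen Xe j = elen Xe 1"
    and "\<exists>C0>0. C0 \<le> \<bar>c\<bar> * curve_length N Xe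
            \<and> \<bar>cos (theta_l N Xe) - \<sigma>\<bar> \<le> C0 * meshh N
            \<and> \<bar>cos (theta_r N Xe) - \<sigma>\<bar> \<le> C0 * meshh N"
proof -
  define t1 where "t1 = (\<lambda>j. fst (edge Xe j) / elen Xe j)"
  define t2 where "t2 = (\<lambda>j. snd (edge Xe j) / elen Xe j)"
  define l where "l = elen Xe"
  have t1j: "fst (edge Xe j) / elen Xe j = t1 j" for j by (simp add: t1_def)
  have t2j: "snd (edge Xe j) / elen Xe j = t2 j" for j by (simp add: t2_def)
  have ab: "fst (edge Xe j) = l j * t1 j" "snd (edge Xe j) = l j * t2 j" if "j \<in> {1..N}" for j
  proof -
    have "elen Xe j \<noteq> 0" using pos[rule_format, OF that] by simp
    then show "fst (edge Xe j) = l j * t1 j" "snd (edge Xe j) = l j * t2 j" by (auto simp: t1_def t2_def l_def)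
  qed
  have unit: "t1 j ^ 2 + t2 j ^ 2 = 1" if j: "j \<in> {1..N}" for j
  proof -
    have lp: "l j > 0" using pos j by (auto simp: l_def)
    have "l j = sqrt ((fst (edge Xe j))^2 + (snd (edge Xe j))^2)"
      by (simp add: l_def elen_def norm_prod_def)
    then have hA: "(fst (edge Xe j))^2 + (snd (edge Xe j))^2 = (l j)^2" by simp
    have "t1 j ^ 2 + t2 j ^ 2 = ((fst (edge Xe j))^2 + (snd (edge Xe j))^2) / (l j)^2"
      by (simp add: t1_def t2_def l_def power_divide add_divide_distrib)
    also have "\<dots> = (l j)^2 / (l j)^2" unfolding hA ..
    also have "\<dots> = 1" using lp by simp
    finally show ?thesis .
  qed
  have lpos: "l j > 0" if "j \<in> {1..N}" for j using pos that by (auto simp: l_def)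
  have step: "t1 (Suc k) - t1 k = c/2 * (l k * t2 k + l (Suc k) * t2 (Suc k))"
    "t2 (Suc k) - t2 k = - (c/2 * (l k * t1 k + l (Suc k) * t1 (Suc k)))"
    if k: "1 \<le> k" "k < N" for k
  proof -
    have "- c/2 * (l k * t2 k + l (Suc k) * t2 (Suc k)) - t1 k + t1 (Suc k) = 0"
      using I1[OF k] ab(2)[of k] ab(2)[of "Suc k"] k unfolding t1j by simp
    then show "t1 (Suc k) - t1 k = c/2 * (l k * t2 k + l (Suc k) * t2 (Suc k))" by simp
    have "c/2 * (l k * t1 k + l (Suc k) * t1 (Suc k)) - t2 k + t2 (Suc k) = 0"
      using I2[OF k] ab(1)[of k] ab(1)[of "Suc k"] k unfolding t2j by simp
    then show "t2 (Suc k) - t2 k = - (c/2 * (l k * t1 k + l (Suc k) * t1 (Suc k)))" by simp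
  qed
  have b0: "t1 1 - \<sigma> = c/2 * snd (edge Xe 1)" using B0 unfolding t1j by simp
  have bN: "t1 N - \<sigma> = - (c/2 * snd (edge Xe N))" using BN unfolding t1j by simp
  show cne: "c \<noteq> 0"
  proof
    assume c0: "c = 0"
    have const: "1 \<le> j \<longrightarrow> j \<le> N \<longrightarrow> t1 j = t1 1 \<and> t2 j = t2 1" for j
    proof (induction j)
      case 0 then show ?case by simp
    next
      case (Suc j)
      show ?case
      proof (cases "j = 0")
        case True then show ?thesis by simp
      next
        case False
        then show ?thesis using Suc step[of j] c0 by auto
      qed
    qed
    have "(\<Sum>j=1..N. snd (Xe j) - snd (Xe (j-1))) = snd (Xe N) - snd (Xe 0)" by (rule telescope)
    also have "\<dots> = 0" using Xe_in by (simp add: inXh_def)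
    finally have "(\<Sum>j=1..N. snd (edge Xe j)) = 0" by (simp add: edge_def)
    moreover have "(\<Sum>j=1..N. snd (edge Xe j)) = (\<Sum>j=1..N. l j) * t2 1"
      unfolding sum_distrib_right
    proof (intro sum.cong refl)
      fix x assume x: "x \<in> {1..N}"
      have "t2 x = t2 1" using const[of x] x by simp
      then show "snd (edge Xe x) = l x * t2 1" using ab(2)[OF x] by simp
    qed
    moreover have "(\<Sum>j=1..N. l j) > 0" using N3 lpos by (intro sum_pos) auto
    ultimately have "t2 1 = 0" by simp
    moreover have "t1 1 = \<sigma>" using b0 c0 by simp
    ultimately have "\<sigma>^2 = 1" using unit[of 1] N3 by auto
    moreover have "\<sigma>^2 < 1" using sig abs_square_less_1 by blast
    ultimately show False by simp
  qed
  have eqlen: "1 \<le> j \<longrightarrow> j \<le> N \<longrightarrow> l j = l 1" for j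
  proof (induction j)
    case 0 then show ?case by simp
  next
    case (Suc j)
    show ?case
    proof (cases "j = 0")
      case True then show ?thesis by simp
    next
      case False
      show ?thesis
      proof (intro impI)
        assume "1 \<le> Suc j" "Suc j \<le> N"
        then have k: "1 \<le> j" "j < N" using False by auto
        have "l j = l (Suc j)"
          by (rule alg[of "t1 j" "t2 j" "t1 (Suc j)" "t2 (Suc j)" "c/2"])
             (use unit[of j] unit[of "Suc j"] k step[OF k] lpos[of j] lpos[of "Suc j"] cne in auto)
        then show "l (Suc j) = l 1" using Suc k by auto
      qed
    qed
  qed
  then show eqall: "\<forall>j\<in>{1..N}. elen Xe j = elen Xe 1" unfolding l_def by (meson atLeastAtMost_iff)
  show "\<exists>C0>0. C0 \<le> \<bar>c\<bar> * curve_length N Xe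
            \<and> \<bar>cos (theta_l N Xe) - \<sigma>\<bar> \<le> C0 * meshh N
            \<and> \<bar>cos (theta_r N Xe) - \<sigma>\<bar> \<le> C0 * meshh N"
  proof (intro exI conjI)
    have L: "curve_length N Xe = real N * l 1"
    proof -
      have "(\<Sum>j=1..N. elen Xe j) = (\<Sum>j=1..N. l 1)"
        by (rule sum.cong[OF refl]) (use eqall in \<open>unfold l_def, blast\<close>)
      then show ?thesis unfolding curve_length_def by simp
    qed
    have l1: "l 1 > 0" using lpos N3 by auto
    have hN: "meshh N \<noteq> 0" using N3 by (simp add: meshh_def)
    have dsf: "ds N Xe Xe j = (1 / elen Xe j) *\<^sub>R edge Xe j" for j
      unfolding ds_def edge_def using hN by (simp only: scaleR_scaleR) simp
    have cl: "cos (theta_l N Xe) = t1 1"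
    proof -
      have "\<bar>t1 1\<bar> \<le> 1" using unit[of 1] N3 abs_le1 by auto
      then show ?thesis unfolding theta_l_def dsf by (simp add: t1_def divide_inverse mult.commute)
    qed
    have cr: "cos (theta_r N Xe) = t1 N"
    proof -
      have "\<bar>t1 N\<bar> \<le> 1" using unit[of N] N3 abs_le1 by auto
      then show ?thesis unfolding theta_r_def dsf by (simp add: t1_def divide_inverse mult.commute)
    qed
    show "\<bar>c\<bar> * curve_length N Xe / 2 > 0" using cne l1 N3 L by simp
    show "\<bar>c\<bar> * curve_length N Xe / 2 \<le> \<bar>c\<bar> * curve_length N Xe" using cne l1 N3 L by simp
    have C: "\<bar>c\<bar> * curve_length N Xe / 2 * meshh N = \<bar>c\<bar> / 2 * l 1"
      using L N3 by (simp add: meshh_def)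
    have s1: "\<bar>snd (edge Xe 1)\<bar> \<le> l 1" using abs_snd_le by (simp add: l_def elen_def)
    have "N \<in> {1..N}" using N3 by simp
    then have eN: "elen Xe N = elen Xe 1" using eqall by blast
    have sN: "\<bar>snd (edge Xe N)\<bar> \<le> l 1" using abs_snd_le[of "edge Xe N"] eN by (simp add: l_def elen_def)
    show "\<bar>cos (theta_l N Xe) - \<sigma>\<bar> \<le> \<bar>c\<bar> * curve_length N Xe / 2 * meshh N"
      unfolding C cl b0 using s1 by (simp add: abs_mult mult_left_mono)
    show "\<bar>cos (theta_r N Xe) - \<sigma>\<bar> \<le> \<bar>c\<bar> * curve_length N Xe / 2 * meshh N"
      unfolding C cr bN using sN by (simp add: abs_mult mult_left_mono)
  qed
qed



lemma tendsto_Max_img: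
  fixes f :: "nat \<Rightarrow> nat \<Rightarrow> real"
  assumes "finite A" "A \<noteq> {}" "\<forall>j\<in>A. (\<lambda>m. f m j) \<longlonglongrightarrow> g j"
  shows "(\<lambda>m. Max (f m ` A)) \<longlonglongrightarrow> Max (g ` A)"
  using assms
proof (induction A rule: finite_ne_induct)
  case (singleton x) then show ?case by simp
next
  case (insert x F)
  then show ?case by (simp add: Max_insert) (intro tendsto_max; simp)
qed

lemma tendsto_Min_img:
  fixes f :: "nat \<Rightarrow> nat \<Rightarrow> real"
  assumes "finite A" "A \<noteq> {}" "\<forall>j\<in>A. (\<lambda>m. f m j) \<longlonglongrightarrow> g j"
  shows "(\<lambda>m. Min (f m ` A)) \<longlonglongrightarrow> Min (g ` A)"
  using assms
proof (induction A rule: finite_ne_induct)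
  case (singleton x) then show ?case by simp
next
  case (insert x F)
  then show ?case by (simp add: Min_insert) (intro tendsto_min; simp)
qed

theorem proposition3p1:
  fixes N :: nat and \<tau> \<eta> \<sigma> \<theta>i :: real
    and X Xt :: "nat \<Rightarrow> nat \<Rightarrow> pt" and \<kappa> :: "nat \<Rightarrow> nat \<Rightarrow> real"
    and Xe :: "nat \<Rightarrow> pt" and \<kappa>e :: "nat \<Rightarrow> real"
  assumes N3: "N \<ge> 3"
    and tau: "\<tau> > 0" and eta: "\<eta> > 0"
    and sigma: "\<sigma> = cos \<theta>i" "0 < \<theta>i" "\<theta>i < pi"
    and sol: "pc_zjb_solution N \<tau> \<eta> \<sigma> X \<kappa> Xt"
    and edges_pos: "\<forall>m. \<forall>j\<in>{1..N}. elen (X m) j > 0"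
    and Xe_in: "inXh N Xe"
    and conv_X: "\<forall>k\<le>N. (\<lambda>m. X m k) \<longlonglongrightarrow> Xe k"
    and conv_kappa: "\<forall>k\<le>N. (\<lambda>m. \<kappa> m k) \<longlonglongrightarrow> \<kappa>e k"
    and conv_Xt: "\<forall>k\<le>N. (\<lambda>m. Xt m k) \<longlonglongrightarrow> Xe k"
    and edges_e_pos: "\<forall>i\<in>{1..N}. elen Xe i > 0"
  shows "(\<exists>\<kappa>c. \<kappa>c \<noteq> 0 \<and>
            (\<forall>j\<in>{1..N}. \<forall>\<rho>\<in>{node N (j - 1)..node N j}. interp N \<kappa>e j \<rho> = \<kappa>c))
       \<and> (\<lambda>m. mesh_ratio N (X m)) \<longlonglongrightarrow> mesh_ratio N Xe
       \<and> mesh_ratio N Xe = 1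
       \<and> (\<exists>C0>0. C0 \<le> \<bar>\<kappa>e 0\<bar> * curve_length N Xe
            \<and> \<bar>cos (theta_l N Xe) - \<sigma>\<bar> \<le> C0 * meshh N
            \<and> \<bar>cos (theta_r N Xe) - \<sigma>\<bar> \<le> C0 * meshh N)"
proof -
  have N: "N > 0" using N3 by simp
  have p: "\<forall>i\<in>{1..N}. elen Xe i \<noteq> 0" using edges_e_pos by auto
  note LE = limit_eqs[OF N sol conv_X conv_kappa conv_Xt p]
  define c where "c = \<kappa>e 0"
  have dk: "\<kappa>e j = \<kappa>e (j-1)" if j: "j \<in> {1..N}" for j
  proof -
    have "stiff N Xe \<kappa>e \<kappa>e = 0" using LE(1) by blast
    then have s0: "(\<Sum>j=1..N. (\<kappa>e j - \<kappa>e (j-1)) * (\<kappa>e j - \<kappa>e (j-1)) / elen Xe j) = 0"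
      by (simp add: stiff_formula[OF N p])
    have nn: "\<forall>i\<in>{1..N}. 0 \<le> (\<kappa>e i - \<kappa>e (i-1)) * (\<kappa>e i - \<kappa>e (i-1)) / elen Xe i"
      using edges_e_pos by (auto intro: divide_nonneg_pos)
    define g where "g = (\<lambda>i. (\<kappa>e i - \<kappa>e (i-1)) * (\<kappa>e i - \<kappa>e (i-1)) / elen Xe i)"
    have "\<forall>i\<in>{1..N}. g i = 0"
      using sum_nonneg_eq_0_iff[of "{1..N}" g] nn s0 unfolding g_def by blast
    then have "(\<kappa>e j - \<kappa>e (j-1)) * (\<kappa>e j - \<kappa>e (j-1)) / elen Xe j = 0"
      using j unfolding g_def by blast
    then show ?thesis using p j by simp
  qed
  have kc: "j \<le> N \<longrightarrow> \<kappa>e j = c" for j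
  proof (induction j)
    case 0 then show ?case by (simp add: c_def)
  next
    case (Suc j)
    then show ?case using dk[of "Suc j"] by auto
  qed
  have E2: "\<forall>\<omega>. inXh N \<omega> \<longrightarrow> lumped N Xe (\<lambda>j k. c * inner (nrm Xe j) (\<omega> k))
        - stiff N Xe Xe \<omega> + \<sigma> * (fst (\<omega> N) - fst (\<omega> 0)) = 0"
  proof (intro allI impI)
    fix \<omega> :: "nat \<Rightarrow> pt" assume om: "inXh N \<omega>"
    have "lumped N Xe (\<lambda>j k. c * inner (nrm Xe j) (\<omega> k)) = lumped N Xe (\<lambda>j k. \<kappa>e k * inner (nrm Xe j) (\<omega> k))"
    proof (rule lumped_cong)
      fix j assume "j \<in> {1..N}"
      then have "\<kappa>e j = c" "\<kappa>e (j-1) = c" using kc[of j] kc[of "j-1"] by auto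
      then show "c * inner (nrm Xe j) (\<omega> j) = \<kappa>e j * inner (nrm Xe j) (\<omega> j) \<and>
          c * inner (nrm Xe j) (\<omega> (j-1)) = \<kappa>e (j-1) * inner (nrm Xe j) (\<omega> (j-1))" by simp
    qed
    then show "lumped N Xe (\<lambda>j k. c * inner (nrm Xe j) (\<omega> k))
        - stiff N Xe Xe \<omega> + \<sigma> * (fst (\<omega> N) - fst (\<omega> 0)) = 0" using LE(2) om by simp
  qed
  note NE = node_eqs[OF N p E2]
  have sig: "\<bar>\<sigma>\<bar> < 1"
  proof -
    have "sin \<theta>i > 0" using sigma by (intro sin_gt_zero) auto
    then have "(sin \<theta>i)^2 > 0" by simp
    moreover have "(sin \<theta>i)^2 + (cos \<theta>i)^2 = 1" by simp
    ultimately have "(cos \<theta>i)^2 < 1" by linarith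
    then have "\<sigma>^2 < 1" using sigma(1) by simp
    then show ?thesis using abs_square_less_1 by blast
  qed
  note G = geometry[OF N3 sig Xe_in edges_e_pos NE]
  have part1: "\<exists>\<kappa>c. \<kappa>c \<noteq> 0 \<and>
            (\<forall>j\<in>{1..N}. \<forall>\<rho>\<in>{node N (j - 1)..node N j}. interp N \<kappa>e j \<rho> = \<kappa>c)"
  proof (intro exI conjI ballI)
    show "c \<noteq> 0" by (rule G(1))
    fix j \<rho> assume j: "j \<in> {1..N}"
    then have "\<kappa>e j = c" "\<kappa>e (j-1) = c" using kc[of j] kc[of "j-1"] by auto
    then show "interp N \<kappa>e j \<rho> = c" by (simp add: interp_def)
  qed
  have img0: "elen Xe ` {1..N} = (\<lambda>_. elen Xe 1) ` {1..N}"
    by (rule image_cong[OF refl]) (use G(2) in blast)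
  have img: "elen Xe ` {1..N} = {elen Xe 1}" unfolding img0 using N by (simp add: image_constant_conv)
  have "1 \<in> {1..N}" using N by simp
  then have l1: "elen Xe 1 > 0" using edges_e_pos by blast
  have mr: "mesh_ratio N Xe = 1"
    unfolding mesh_ratio_def img using l1 by simp
  have conv: "(\<lambda>m. mesh_ratio N (X m)) \<longlonglongrightarrow> mesh_ratio N Xe"
    unfolding mesh_ratio_def
  proof (intro tendsto_divide tendsto_Max_img tendsto_Min_img)
    show "\<forall>j\<in>{1..N}. (\<lambda>m. elen (X m) j) \<longlonglongrightarrow> elen Xe j"
      using conv_X by (auto intro: elen_lim)
    show "Min (elen Xe ` {1..N}) \<noteq> 0" unfolding img using l1 by simp
  qed (use N conv_X in \<open>auto intro: elen_lim\<close>)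
  show ?thesis using part1 conv mr G(3) unfolding c_def by blast
qed


end
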